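(* Let $G(\pi)=\mathcal{F}(\mu^\pi)$ be a general-utility objective with $\mathcal{F}$ concave and differentiable, and $\Gamma(\pi)=\nabla\mathcal{F}(\mu^\pi)$. For any policies $\pi,\pi'$, $$G(\pi')-G(\pi)\le\frac{1}{1-\gamma}\,\mathbb{E}_{s\sim d^{\pi'}}\Big[\big[\mathcal{T}^{\pi'}_{\Gamma(\pi)}V^\pi_{\Gamma(\pi)}\big](s)-V^\pi_{\Gamma(\pi)}(s)\Big].$$
   Context: Finite MDP: states $\mathcal{S}$, actions $\mathcal{A}$, transition kernel $\mathcal{P}$, initial distribution $\rho$, discount $\gamma\in[0,1)$. Occupancy measure $\mu^\pi(s,a)=\sum_{s_0}\rho(s_0)\sum_{\tau\ge0}\gamma^\tau\Pr^\pi[s_\tau=s,a_\tau=a\mid s_0]$; $\mathcal{K}$ the convex set of occupancy measures; $\mathcal{F}:\mathcal{K}\to\mathbb{R}$. For bounded $u$, $Q^\pi_u(s,a)=\mathbb{E}[\sum_{\tau\ge0}\gamma^\tau u(s_\tau,a_\tau)\mid s_0=s,a_0=a]$, $V^\pi_u(s)=\sum_a\pi(a\mid s)Q^\pi_u(s,a)$. Bellman operator: $[\mathcal{T}^{\pi'}_uV](s)=\sum_a\pi'(a\mid s)\big(u(s,a)+\gamma\sum_{s'}\mathcal{P}(s'\mid s,a)V(s')\big)$. Discounted state distribution: $d^{\pi'}=(1-\gamma)\rho^\top(I-\gamma P^{\pi'})^{-1}$ where $P^{\pi'}[s,s']=\sum_a\pi'(a\mid s)\mathcal{P}(s'\mid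 s,a)$. *)

theory Defs
  imports "HOL-Analysis.Analysis"
begin

text \<open>Transition kernel P s a s' = probability of moving to s' from s under a.
  A (stationary, stochastic) policy pol s a = probability of a in state s.\<close>

definition stochastic_kernel :: "('s::finite \<Rightarrow> 'a::finite \<Rightarrow> 's \<Rightarrow> real) \<Rightarrow> bool" where
  "stochastic_kernel P \<longleftrightarrow> (\<forall>s a s'. 0 \<le> P s a s') \<and> (\<forall>s a. (\<Sum>s'\<in>UNIV. P s a s') = 1)"

definition distribution :: "('s::finite \<Rightarrow> real) \<Rightarrow> bool" where
  "distribution q \<longleftrightarrow> (\<forall>s. 0 \<le> q s) \<and> (\<Sum>s\<in>UNIV. q s) = 1"

definition policy :: "('s::finite \<Rightarrow> 'a::finite \<Rightarrow> real) \<Rightarrow> bool" where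
  "policy pol \<longleftrightarrow> (\<forall>s a. 0 \<le> pol s a) \<and> (\<forall>s. (\<Sum>a\<in>UNIV. pol s a) = 1)"

text \<open>One step of the state-action Markov chain induced by pol:
  q is the joint law of (s_t, a_t), the result is the law of (s_{t+1}, a_{t+1}).\<close>
definition sa_step :: "('s::finite \<Rightarrow> 'a::finite \<Rightarrow> 's \<Rightarrow> real) \<Rightarrow> ('s \<Rightarrow> 'a \<Rightarrow> real)
    \<Rightarrow> ('s \<times> 'a \<Rightarrow> real) \<Rightarrow> ('s \<times> 'a \<Rightarrow> real)" where
  "sa_step P pol q = (\<lambda>(s', a'). \<Sum>z\<in>UNIV. q z * P (fst z) (snd z) s' * pol s' a')"

definition sa_dist :: "('s::finite \<Rightarrow> 'a::finite \<Rightarrow> 's \<Rightarrow> real) \<Rightarrow> ('s \<Rightarrow> 'a \<Rightarrow> real)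
    \<Rightarrow> ('s \<times> 'a \<Rightarrow> real) \<Rightarrow> nat \<Rightarrow> ('s \<times> 'a \<Rightarrow> real)" where
  "sa_dist P pol q tau = (sa_step P pol ^^ tau) q"

definition occ :: "('s::finite \<Rightarrow> 'a::finite \<Rightarrow> 's \<Rightarrow> real) \<Rightarrow> ('s \<Rightarrow> real) \<Rightarrow> real
    \<Rightarrow> ('s \<Rightarrow> 'a \<Rightarrow> real) \<Rightarrow> real ^ ('s \<times> 'a)" where
  "occ P rho \<gamma> pol = (\<chi> z. \<Sum>s0\<in>UNIV. rho s0 *
      (\<Sum>tau. \<gamma> ^ tau * sa_dist P pol (\<lambda>(x, b). if x = s0 then pol s0 b else 0) tau z))"

definition occ_set :: "('s::finite \<Rightarrow> 'a::finite \<Rightarrow> 's \<Rightarrow> real) \<Rightarrow> ('s \<Rightarrow> real) \<Rightarrow> real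
    \<Rightarrow> (real ^ ('s \<times> 'a)) set" where
  "occ_set P rho \<gamma> = {occ P rho \<gamma> pol | pol. policy pol}"

definition Qfun :: "('s::finite \<Rightarrow> 'a::finite \<Rightarrow> 's \<Rightarrow> real) \<Rightarrow> real \<Rightarrow> ('s \<Rightarrow> 'a \<Rightarrow> real)
    \<Rightarrow> ('s \<times> 'a \<Rightarrow> real) \<Rightarrow> 's \<Rightarrow> 'a \<Rightarrow> real" where
  "Qfun P \<gamma> pol u s a = (\<Sum>tau. \<gamma> ^ tau *
      (\<Sum>z\<in>UNIV. sa_dist P pol (\<lambda>z'. if z' = (s, a) then 1 else 0) tau z * u z))"

definition Vfun :: "('s::finite \<Rightarrow> 'a::finite \<Rightarrow> 's \<Rightarrow> real) \<Rightarrow> real \<Rightarrow> ('s \<Rightarrow> 'a \<Rightarrow> real)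
    \<Rightarrow> ('s \<times> 'a \<Rightarrow> real) \<Rightarrow> 's \<Rightarrow> real" where
  "Vfun P \<gamma> pol u s = (\<Sum>a\<in>UNIV. pol s a * Qfun P \<gamma> pol u s a)"

definition bellman :: "('s::finite \<Rightarrow> 'a::finite \<Rightarrow> 's \<Rightarrow> real) \<Rightarrow> real \<Rightarrow> ('s \<Rightarrow> 'a \<Rightarrow> real)
    \<Rightarrow> ('s \<times> 'a \<Rightarrow> real) \<Rightarrow> ('s \<Rightarrow> real) \<Rightarrow> 's \<Rightarrow> real" where
  "bellman P \<gamma> pol' u V s = (\<Sum>a\<in>UNIV. pol' s a * (u (s, a) + \<gamma> * (\<Sum>s'\<in>UNIV. P s a s' * V s')))"

definition Pmat :: "('s::finite \<Rightarrow> 'a::finite \<Rightarrow> 's \<Rightarrow> real) \<Rightarrow> ('s \<Rightarrow> 'a \<Rightarrow> real) \<Rightarrow> real ^ 's ^ 's" where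
  "Pmat P pol' = (\<chi> s s'. \<Sum>a\<in>UNIV. pol' s a * P s a s')"

definition dstate :: "('s::finite \<Rightarrow> 'a::finite \<Rightarrow> 's \<Rightarrow> real) \<Rightarrow> ('s \<Rightarrow> real) \<Rightarrow> real
    \<Rightarrow> ('s \<Rightarrow> 'a \<Rightarrow> real) \<Rightarrow> real ^ 's" where
  "dstate P rho \<gamma> pol' = (1 - \<gamma>) *\<^sub>R ((\<chi> s. rho s) v* matrix_inv (mat 1 - \<gamma> *\<^sub>R Pmat P pol'))"

end

theory Submission
  imports Defs
begin


lemma sa_step_apply:
  "sa_step P pol q z = (\<Sum>z'\<in>UNIV. q z' * P (fst z') (snd z') (fst z) * pol (fst z) (snd z))"
  by (cases z) (simp add: sa_step_def)

lemma sa_dist_0[simp]: "sa_dist P pol q 0 = q"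
  by (simp add: sa_dist_def)

lemma sa_dist_Suc: "sa_dist P pol q (Suc n) = sa_step P pol (sa_dist P pol q n)"
  by (simp add: sa_dist_def)

lemma sa_step_lin:
  "sa_step P pol (\<lambda>z. \<Sum>i\<in>I. c i * q i z) = (\<lambda>z. \<Sum>i\<in>I. c i * sa_step P pol (q i) z)"
proof
  fix z
  show "sa_step P pol (\<lambda>z. \<Sum>i\<in>I. c i * q i z) z = (\<Sum>i\<in>I. c i * sa_step P pol (q i) z)"
    unfolding sa_step_apply
    by (simp add: sum_distrib_left sum_distrib_right mult.assoc sum.swap[of _ I])
qed

lemma sa_step_add_scale:
  "sa_step P pol (\<lambda>z. a * q z + b * r z) = (\<lambda>z. a * sa_step P pol q z + b * sa_step P pol r z)"
  unfolding sa_step_apply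
  by (auto simp: sum_distrib_left sum_distrib_right algebra_simps sum.distrib)

lemma sa_dist_lin:
  "sa_dist P pol (\<lambda>z. \<Sum>i\<in>I. c i * q i z) n = (\<lambda>z. \<Sum>i\<in>I. c i * sa_dist P pol (q i) n z)"
proof (induction n)
  case 0 then show ?case by simp
next
  case (Suc n) then show ?case by (simp add: sa_dist_Suc sa_step_lin)
qed

lemma sum_UNIV_pair: "(\<Sum>z\<in>(UNIV::('s::finite \<times> 'a::finite) set). f z) = (\<Sum>s\<in>UNIV. \<Sum>a\<in>UNIV. f (s, a))"
  by (simp add: sum.cartesian_product UNIV_Times_UNIV[symmetric] del: UNIV_Times_UNIV)

lemma sa_step_l1:
  fixes P :: "'s::finite \<Rightarrow> 'a::finite \<Rightarrow> 's \<Rightarrow> real"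
  assumes "stochastic_kernel P" "policy pol"
  shows "(\<Sum>z\<in>UNIV. \<bar>sa_step P pol q z\<bar>) \<le> (\<Sum>z\<in>UNIV. \<bar>q z\<bar>)"
proof -
  have P0: "\<And>s a s'. 0 \<le> P s a s'" and P1: "\<And>s a. (\<Sum>s'\<in>UNIV. P s a s') = 1"
    using assms(1) by (auto simp: stochastic_kernel_def)
  have p0: "\<And>s a. 0 \<le> pol s a" and p1: "\<And>s. (\<Sum>a\<in>UNIV. pol s a) = 1"
    using assms(2) by (auto simp: policy_def)
  have "(\<Sum>z\<in>UNIV. \<bar>sa_step P pol q z\<bar>) \<le>
      (\<Sum>z\<in>UNIV. \<Sum>z'\<in>UNIV. \<bar>q z'\<bar> * P (fst z') (snd z') (fst z) * pol (fst z) (snd z))"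
    unfolding sa_step_apply
    by (intro sum_mono order.trans[OF sum_abs]) (simp add: abs_mult P0 p0)
  also have "\<dots> = (\<Sum>z'\<in>UNIV. \<bar>q z'\<bar> * (\<Sum>s\<in>UNIV. P (fst z') (snd z') s * (\<Sum>a\<in>UNIV. pol s a)))"
    by (subst sum.swap) (simp add: sum_UNIV_pair sum_distrib_left mult.assoc)
  also have "\<dots> = (\<Sum>z\<in>UNIV. \<bar>q z\<bar>)"
    by (simp add: p1 P1)
  finally show ?thesis .
qed

lemma sa_dist_l1:
  fixes P :: "'s::finite \<Rightarrow> 'a::finite \<Rightarrow> 's \<Rightarrow> real"
  assumes "stochastic_kernel P" "policy pol"
  shows "(\<Sum>z\<in>UNIV. \<bar>sa_dist P pol q n z\<bar>) \<le> (\<Sum>z\<in>UNIV. \<bar>q z\<bar>)"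
proof (induction n)
  case 0 then show ?case by simp
next
  case (Suc n) then show ?case
    using sa_step_l1[OF assms, of "sa_dist P pol q n"] by (simp add: sa_dist_Suc)
qed

lemma sa_dist_bound:
  fixes P :: "'s::finite \<Rightarrow> 'a::finite \<Rightarrow> 's \<Rightarrow> real"
  assumes "stochastic_kernel P" "policy pol"
  shows "\<bar>sa_dist P pol q n z\<bar> \<le> (\<Sum>z\<in>UNIV. \<bar>q z\<bar>)"
proof -
  have "\<bar>sa_dist P pol q n z\<bar> \<le> (\<Sum>z\<in>UNIV. \<bar>sa_dist P pol q n z\<bar>)"
    by (rule member_le_sum) auto
  then show ?thesis using sa_dist_l1[OF assms] by (meson order.trans)
qed

lemma summable_geo_bound:
  fixes f :: "nat \<Rightarrow> real"
  assumes "0 \<le> \<gamma>" "\<gamma> < 1" "\<And>n. \<bar>f n\<bar> \<le> B"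
  shows "summable (\<lambda>n. \<gamma> ^ n * f n)"
proof (rule summable_comparison_test[where g = "\<lambda>n. B * \<gamma> ^ n"])
  show "\<exists>N. \<forall>n\<ge>N. norm (\<gamma> ^ n * f n) \<le> B * \<gamma> ^ n"
    using assms by (auto simp: abs_mult mult.commute intro!: mult_right_mono)
  show "summable (\<lambda>n. B * \<gamma> ^ n)"
    using assms by (intro summable_mult summable_geometric) auto
qed

lemma summable_sa_dist:
  fixes P :: "'s::finite \<Rightarrow> 'a::finite \<Rightarrow> 's \<Rightarrow> real"
  assumes "stochastic_kernel P" "policy pol" "0 \<le> \<gamma>" "\<gamma> < 1"
  shows "summable (\<lambda>n. \<gamma> ^ n * (sa_dist P pol q n z * c))"
proof -
  have "\<bar>sa_dist P pol q n z * c\<bar> \<le> (\<Sum>z\<in>UNIV. \<bar>q z\<bar>) * \<bar>c\<bar>" for n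
    using sa_dist_bound[OF assms(1,2)] by (simp add: abs_mult mult_right_mono)
  then show ?thesis by (rule summable_geo_bound[OF assms(3,4)])
qed

definition Lq where
  "Lq P pol \<gamma> u q = (\<Sum>\<tau>. \<gamma> ^ \<tau> * (\<Sum>z\<in>UNIV. sa_dist P pol q \<tau> z * u z))"

definition Mq where
  "Mq P pol \<gamma> q z = (\<Sum>\<tau>. \<gamma> ^ \<tau> * sa_dist P pol q \<tau> z)"

context
  fixes P :: "'s::finite \<Rightarrow> 'a::finite \<Rightarrow> 's \<Rightarrow> real" and pol :: "'s \<Rightarrow> 'a \<Rightarrow> real" and \<gamma> :: real
  assumes SK: "stochastic_kernel P" and PO: "policy pol" and g0: "0 \<le> \<gamma>" and g1: "\<gamma> < 1"
begin

lemma sums_dist: "(\<lambda>\<tau>. \<gamma> ^ \<tau> * sa_dist P pol q \<tau> z) sums Mq P pol \<gamma> q z"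
  using summable_sa_dist[OF SK PO g0 g1, of q z 1] by (simp add: Mq_def summable_sums)

lemma sums_L: "(\<lambda>\<tau>. \<gamma> ^ \<tau> * (\<Sum>z\<in>UNIV. sa_dist P pol q \<tau> z * u z)) sums Lq P pol \<gamma> u q"
proof -
  have "summable (\<lambda>\<tau>. \<Sum>z\<in>UNIV. \<gamma> ^ \<tau> * (sa_dist P pol q \<tau> z * u z))"
    by (intro summable_sum summable_sa_dist[OF SK PO g0 g1])
  then show ?thesis by (simp add: Lq_def summable_sums sum_distrib_left)
qed

lemma Lq_lin:
  "Lq P pol \<gamma> u (\<lambda>z. \<Sum>i\<in>I. c i * q i z) = (\<Sum>i\<in>I. c i * Lq P pol \<gamma> u (q i))"
proof -
  have "(\<lambda>\<tau>. \<Sum>i\<in>I. c i * (\<gamma> ^ \<tau> * (\<Sum>z\<in>UNIV. sa_dist P pol (q i) \<tau> z * u z)))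
      sums (\<Sum>i\<in>I. c i * Lq P pol \<gamma> u (q i))" (is "?f sums ?S")
    by (intro sums_sum sums_mult sums_L)
  moreover have "(\<lambda>\<tau>. \<Sum>i\<in>I. c i * (\<gamma> ^ \<tau> * (\<Sum>z\<in>UNIV. sa_dist P pol (q i) \<tau> z * u z))) =
     (\<lambda>\<tau>. \<gamma> ^ \<tau> * (\<Sum>z\<in>UNIV. sa_dist P pol (\<lambda>z. \<Sum>i\<in>I. c i * q i z) \<tau> z * u z))"
  proof
    fix \<tau>
    have "(\<Sum>z\<in>UNIV. (\<Sum>i\<in>I. c i * sa_dist P pol (q i) \<tau> z) * u z)
        = (\<Sum>z\<in>UNIV. \<Sum>i\<in>I. c i * (sa_dist P pol (q i) \<tau> z * u z))"
      by (simp add: sum_distrib_right mult.assoc)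
    also have "\<dots> = (\<Sum>i\<in>I. \<Sum>z\<in>UNIV. c i * (sa_dist P pol (q i) \<tau> z * u z))"
      by (rule sum.swap)
    also have "\<dots> = (\<Sum>i\<in>I. c i * (\<Sum>z\<in>UNIV. sa_dist P pol (q i) \<tau> z * u z))"
      by (simp add: sum_distrib_left)
    finally show "(\<Sum>i\<in>I. c i * (\<gamma> ^ \<tau> * (\<Sum>z\<in>UNIV. sa_dist P pol (q i) \<tau> z * u z))) =
      \<gamma> ^ \<tau> * (\<Sum>z\<in>UNIV. sa_dist P pol (\<lambda>z. \<Sum>i\<in>I. c i * q i z) \<tau> z * u z)"
      by (simp add: sa_dist_lin sum_distrib_left mult.left_commute)
  qed
  ultimately have "(\<lambda>\<tau>. \<gamma> ^ \<tau> *
          (\<Sum>z\<in>UNIV. sa_dist P pol (\<lambda>z. \<Sum>i\<in>I. c i * q i z) \<tau> z * u z)) sums ?S" by simp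
  from sums_unique2[OF sums_L this] show ?thesis .
qed

lemma Mq_fix: "Mq P pol \<gamma> q z = q z + \<gamma> * sa_step P pol (Mq P pol \<gamma> q) z"
proof -
  have "(\<lambda>\<tau>. \<Sum>z'\<in>UNIV. \<gamma> * ((\<gamma> ^ \<tau> * sa_dist P pol q \<tau> z') * (P (fst z') (snd z') (fst z) * pol (fst z) (snd z))))
      sums (\<Sum>z'\<in>UNIV. \<gamma> * (Mq P pol \<gamma> q z' * (P (fst z') (snd z') (fst z) * pol (fst z) (snd z))))"
    by (intro sums_sum sums_mult sums_mult2 sums_dist)
  moreover have "(\<lambda>\<tau>. \<Sum>z'\<in>UNIV. \<gamma> * ((\<gamma> ^ \<tau> * sa_dist P pol q \<tau> z') * (P (fst z') (snd z') (fst z) * pol (fst z) (snd z))))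
     = (\<lambda>\<tau>. \<gamma> ^ Suc \<tau> * sa_dist P pol q (Suc \<tau>) z)"
    by (simp add: sa_dist_Suc sa_step_apply sum_distrib_left mult_ac)
  ultimately have "(\<lambda>\<tau>. \<gamma> ^ Suc \<tau> * sa_dist P pol q (Suc \<tau>) z) sums (\<gamma> * sa_step P pol (Mq P pol \<gamma> q) z)"
    by (simp add: sa_step_apply sum_distrib_left mult_ac)
  then have "(\<lambda>\<tau>. \<gamma> ^ \<tau> * sa_dist P pol q \<tau> z) sums (\<gamma> * sa_step P pol (Mq P pol \<gamma> q) z + q z)"
    using sums_Suc_iff[of "\<lambda>\<tau>. \<gamma> ^ \<tau> * sa_dist P pol q \<tau> z"] by simp
  from sums_unique2[OF sums_dist[of q z] this] show ?thesis by linarith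
qed

end



lemma matrix_inv_props:
  fixes A :: "real ^ 'n ^ 'n"
  assumes "invertible A"
  shows "A ** matrix_inv A = mat 1" "matrix_inv A ** A = mat 1"
proof -
  have "\<exists>A'. A ** A' = mat 1 \<and> A' ** A = mat 1" using assms by (simp add: invertible_def)
  then have "A ** matrix_inv A = mat 1 \<and> matrix_inv A ** A = mat 1"
    unfolding matrix_inv_def by (rule someI_ex)
  then show "A ** matrix_inv A = mat 1" "matrix_inv A ** A = mat 1" by auto
qed

lemma Pmat_apply: "Pmat P pol $ s $ s' = (\<Sum>a\<in>UNIV. pol s a * P s a s')"
  by (simp add: Pmat_def)

lemma invertible_IP:
  fixes P :: "'s::finite \<Rightarrow> 'a::finite \<Rightarrow> 's \<Rightarrow> real" and pol :: "'s \<Rightarrow> 'a \<Rightarrow> real"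
  assumes SK: "stochastic_kernel P" and PO: "policy pol" and g0: "0 \<le> \<gamma>" and g1: "\<gamma> < 1"
  shows "invertible (mat 1 - \<gamma> *\<^sub>R Pmat P pol)"
proof -
  let ?M = "Pmat P pol"
  have P0: "\<And>s a s'. 0 \<le> P s a s'" and P1: "\<And>s a. (\<Sum>s'\<in>UNIV. P s a s') = 1"
    using SK by (auto simp: stochastic_kernel_def)
  have p0: "\<And>s a. 0 \<le> pol s a" and p1: "\<And>s. (\<Sum>a\<in>UNIV. pol s a) = 1"
    using PO by (auto simp: policy_def)
  have M0: "0 \<le> ?M $ s $ s'" for s s' by (simp add: Pmat_apply P0 p0 sum_nonneg)
  have M1: "(\<Sum>s'\<in>UNIV. ?M $ s $ s') = 1" for s
    by (simp add: Pmat_apply sum.swap[of _ UNIV] sum_distrib_left[symmetric] P1 p1)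
  have "\<forall>x. (mat 1 - \<gamma> *\<^sub>R ?M) *v x = 0 \<longrightarrow> x = 0"
  proof (intro allI impI)
    fix x :: "real ^ 's"
    assume h: "(mat 1 - \<gamma> *\<^sub>R ?M) *v x = 0"
    have xt: "x $ t = \<gamma> * (\<Sum>s'\<in>UNIV. ?M $ t $ s' * x $ s')" for t
    proof -
      have "((mat 1 - \<gamma> *\<^sub>R ?M) *v x) $ t = 0" using h by simp
      then show ?thesis
        by (simp add: matrix_vector_mult_def mat_def sum_subtractf left_diff_distrib sum_distrib_left mult.assoc
            if_distrib[of "\<lambda>c. c * _"] cong: if_cong)
    qed
    define m where "m = Max (range (\<lambda>t. \<bar>x $ t\<bar>))"
    have mge: "\<bar>x $ t\<bar> \<le> m" for t unfolding m_def by (rule Max_ge) auto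
    have "m \<in> range (\<lambda>t. \<bar>x $ t\<bar>)" unfolding m_def by (rule Max_in) auto
    then obtain t0 where t0: "m = \<bar>x $ t0\<bar>" by auto
    have "\<bar>x $ t0\<bar> \<le> \<gamma> * m"
    proof -
      have "\<bar>x $ t0\<bar> = \<gamma> * \<bar>\<Sum>s'\<in>UNIV. ?M $ t0 $ s' * x $ s'\<bar>"
        using xt[of t0] g0 by (simp add: abs_mult)
      also have "\<dots> \<le> \<gamma> * (\<Sum>s'\<in>UNIV. ?M $ t0 $ s' * m)"
      proof (intro mult_left_mono g0 order.trans[OF sum_abs] sum_mono)
        fix s' show "\<bar>?M $ t0 $ s' * x $ s'\<bar> \<le> ?M $ t0 $ s' * m"
          using M0 mge by (simp add: abs_mult mult_left_mono)
      qed
      also have "\<dots> = \<gamma> * m" by (simp add: sum_distrib_right[symmetric] M1)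
      finally show ?thesis .
    qed
    then have "m = 0" using t0 g1 mge[of t0]
      by (smt (verit, ccfv_SIG) mult_le_cancel_right1)
    then show "x = 0" using mge by (simp add: vec_eq_iff)
  qed
  then show ?thesis
    by (simp add: invertible_left_inverse matrix_left_invertible_ker)
qed


lemma concave_grad:
  fixes F :: "'v::euclidean_space \<Rightarrow> real"
  assumes "concave_on S F" "x\<in>S" "y\<in>S" "(F has_derivative (\<lambda>h. g \<bullet> h)) (at x within S)"
  shows "F y - F x \<le> g \<bullet> (y - x)"
proof -
  have cS: "convex S" using assms(1) by (simp add: concave_on_iff)
  define p where "p = (\<lambda>t::real. x + t *\<^sub>R (y - x))"
  have pS: "p t \<in> S" if "t \<in> {0<..<1}" for t
  proof -
    have "p t = (1 - t) *\<^sub>R x + t *\<^sub>R y" by (simp add: p_def algebra_simps)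
    then show ?thesis using cS assms(2,3) that by (simp add: convex_alt)
  qed
  have pd: "(p has_derivative (\<lambda>t. t *\<^sub>R (y - x))) (at 0 within {0<..<1})"
    unfolding p_def by (auto intro!: derivative_eq_intros)
  have Fd: "(F has_derivative (\<lambda>h. g \<bullet> h)) (at (p 0) within (p ` {0<..<1}))"
  proof -
    have "p ` {0<..<1} \<subseteq> S" using pS by blast
    moreover have "p 0 = x" by (simp add: p_def)
    ultimately show ?thesis using has_derivative_subset[OF assms(4)] by simp
  qed
  have "((F \<circ> p) has_derivative ((\<lambda>h. g \<bullet> h) \<circ> (\<lambda>t. t *\<^sub>R (y - x)))) (at 0 within {0<..<1})"
    by (rule diff_chain_within[OF pd Fd])
  then have "((F \<circ> p) has_field_derivative (g \<bullet> (y - x))) (at 0 within {0<..<1})"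
    unfolding has_field_derivative_def by (simp add: o_def mult.commute[of _ "g \<bullet> (y - x)"])
  then have lim: "((\<lambda>t. ((F \<circ> p) t - (F \<circ> p) 0) / (t - 0)) \<longlongrightarrow> g \<bullet> (y - x)) (at 0 within {0<..<1})"
    by (simp add: has_field_derivative_iff)
  have ev: "eventually (\<lambda>t. F y - F x \<le> ((F \<circ> p) t - (F \<circ> p) 0) / (t - 0)) (at 0 within {0<..<1})"
    unfolding eventually_at_filter
  proof (intro always_eventually allI impI)
    fix t :: real assume "t \<noteq> 0" "t \<in> {0<..<1}"
    then have t: "0 < t" "t < 1" by auto
    have "p t = (1 - t) *\<^sub>R x + t *\<^sub>R y" by (simp add: p_def algebra_simps)
    then have "F (p t) \<ge> (1 - t) * F x + t * F y"
      using concave_onD[OF assms(1), of t x y] t assms(2,3) by simp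
    then have "t * (F y - F x) \<le> F (p t) - F (p 0)" by (simp add: p_def algebra_simps)
    then show "F y - F x \<le> ((F \<circ> p) t - (F \<circ> p) 0) / (t - 0)"
      using t by (simp add: pos_le_divide_eq mult.commute)
  qed
  have nt: "\<not> trivial_limit (at (0::real) within {0<..<1})"
    by (simp add: trivial_limit_within islimpt_greaterThanLessThan1)
  show ?thesis by (rule tendsto_lowerbound[OF lim ev nt])
qed

lemma sum_Mq_L:
  fixes P :: "'s::finite \<Rightarrow> 'a::finite \<Rightarrow> 's \<Rightarrow> real" and pol :: "'s \<Rightarrow> 'a \<Rightarrow> real"
  assumes SK: "stochastic_kernel P" and PO: "policy pol" and g0: "0 \<le> \<gamma>" and g1: "\<gamma> < 1"
  shows "(\<Sum>z\<in>UNIV. Mq P pol \<gamma> q z * u z) = Lq P pol \<gamma> u q"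
proof -
  have "(\<lambda>\<tau>. \<Sum>z\<in>UNIV. \<gamma> ^ \<tau> * sa_dist P pol q \<tau> z * u z) sums (\<Sum>z\<in>UNIV. Mq P pol \<gamma> q z * u z)"
    by (intro sums_sum sums_mult2 sums_dist[OF SK PO g0 g1])
  then have "(\<lambda>\<tau>. \<gamma> ^ \<tau> * (\<Sum>z\<in>UNIV. sa_dist P pol q \<tau> z * u z)) sums (\<Sum>z\<in>UNIV. Mq P pol \<gamma> q z * u z)"
    by (simp add: sum_distrib_left mult.assoc)
  from sums_unique2[OF this sums_L[OF SK PO g0 g1]] show ?thesis .
qed

lemma occ_Mq: "occ P rho \<gamma> pol $ z = (\<Sum>s0\<in>UNIV. rho s0 * Mq P pol \<gamma> (\<lambda>(x, b). if x = s0 then pol s0 b else 0) z)"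
  by (simp add: occ_def Mq_def)

lemma part_b:
  fixes P :: "'s::finite \<Rightarrow> 'a::finite \<Rightarrow> 's \<Rightarrow> real" and pol :: "'s \<Rightarrow> 'a \<Rightarrow> real"
  assumes SK: "stochastic_kernel P" and PO: "policy pol" and g0: "0 \<le> \<gamma>" and g1: "\<gamma> < 1"
  shows "(\<Sum>z\<in>UNIV. u z * occ P rho \<gamma> pol $ z) = (\<Sum>s\<in>UNIV. rho s * Vfun P \<gamma> pol u s)"
proof -
  define qs where "qs s0 = (\<lambda>(x, b). if x = s0 then pol s0 b else (0::real))" for s0
  have qs_eq: "qs s0 = (\<lambda>z. \<Sum>a\<in>UNIV. pol s0 a * (if z = (s0, a) then 1 else 0))" for s0
  proof
    fix z show "qs s0 z = (\<Sum>a\<in>UNIV. pol s0 a * (if z = (s0, a) then 1 else 0))"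
      by (cases z) (auto simp: qs_def if_distrib[of "\<lambda>c. _ * c"] cong: if_cong)
  qed
  have V: "Vfun P \<gamma> pol u s0 = Lq P pol \<gamma> u (qs s0)" for s0
    unfolding qs_eq Lq_lin[OF SK PO g0 g1] by (simp add: Vfun_def Qfun_def Lq_def)
  have "(\<Sum>z\<in>UNIV. u z * occ P rho \<gamma> pol $ z) = (\<Sum>z\<in>UNIV. \<Sum>s0\<in>UNIV. rho s0 * (Mq P pol \<gamma> (qs s0) z * u z))"
    by (simp add: occ_Mq qs_def sum_distrib_left mult_ac)
  also have "\<dots> = (\<Sum>s0\<in>UNIV. \<Sum>z\<in>UNIV. rho s0 * (Mq P pol \<gamma> (qs s0) z * u z))"
    by (rule sum.swap)
  also have "\<dots> = (\<Sum>s0\<in>UNIV. rho s0 * Lq P pol \<gamma> u (qs s0))"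
    by (simp add: sum_distrib_left[symmetric] sum_Mq_L[OF SK PO g0 g1])
  finally show ?thesis by (simp add: V)
qed



lemma vmA: "(x v* (mat 1 - \<gamma> *\<^sub>R M)) $ j = x $ j - \<gamma> * (x v* M) $ j"
  for x :: "real ^ 'n"
proof -
  have "(x v* (mat 1 - \<gamma> *\<^sub>R M)) $ j = (\<Sum>i\<in>UNIV. x $ i * (if i = j then 1 else 0)) - (\<Sum>i\<in>UNIV. \<gamma> * (x $ i * M $ i $ j))"
    by (simp add: vector_matrix_mult_def mat_def right_diff_distrib sum_subtractf mult_ac)
  also have "\<dots> = x $ j - \<gamma> * (x v* M) $ j"
    by (simp add: vector_matrix_mult_def sum_distrib_left mult_ac if_distrib[of "\<lambda>c. _ * c"] cong: if_cong)
  finally show ?thesis .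
qed

lemma part_a:
  fixes P :: "'s::finite \<Rightarrow> 'a::finite \<Rightarrow> 's \<Rightarrow> real" and pol :: "'s \<Rightarrow> 'a \<Rightarrow> real" and rho :: "'s \<Rightarrow> real"
  assumes SK: "stochastic_kernel P" and PO: "policy pol" and g0: "0 \<le> \<gamma>" and g1: "\<gamma> < 1"
  defines "W \<equiv> (\<chi> s. rho s) v* matrix_inv (mat 1 - \<gamma> *\<^sub>R Pmat P pol)"
  shows "occ P rho \<gamma> pol $ (s, a) = W $ s * pol s a"
    and "W $ s' = rho s' + \<gamma> * (W v* Pmat P pol) $ s'"
proof -
  define A where "A = mat 1 - \<gamma> *\<^sub>R Pmat P pol"
  have invA: "A ** matrix_inv A = mat 1" "matrix_inv A ** A = mat 1"
    using matrix_inv_props[OF invertible_IP[OF SK PO g0 g1]] by (auto simp: A_def)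
  define qs where "qs s0 = (\<lambda>(x, b). if x = s0 then pol s0 b else (0::real))" for s0
  define m where "m z = occ P rho \<gamma> pol $ z" for z
  have m_eq: "m = (\<lambda>z. \<Sum>s0\<in>UNIV. rho s0 * Mq P pol \<gamma> (qs s0) z)"
    by (auto simp: m_def occ_Mq qs_def)
  have q0: "(\<Sum>s0\<in>UNIV. rho s0 * qs s0 (s, a)) = rho s * pol s a" for s a
    by (simp add: qs_def if_distrib[of "\<lambda>c. _ * c"] cong: if_cong)
  have mfix: "m (s, a) = rho s * pol s a + \<gamma> * sa_step P pol m (s, a)" for s a
  proof -
    have "m (s, a) = (\<Sum>s0\<in>UNIV. rho s0 * (qs s0 (s, a) + \<gamma> * sa_step P pol (Mq P pol \<gamma> (qs s0)) (s, a)))"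
      unfolding m_eq using Mq_fix[OF SK PO g0 g1] by simp
    also have "\<dots> = (\<Sum>s0\<in>UNIV. rho s0 * qs s0 (s, a)) + \<gamma> * (\<Sum>s0\<in>UNIV. rho s0 * sa_step P pol (Mq P pol \<gamma> (qs s0)) (s, a))"
      by (simp add: distrib_left sum.distrib sum_distrib_left mult_ac)
    also have "\<dots> = rho s * pol s a + \<gamma> * sa_step P pol m (s, a)"
      unfolding q0 m_eq sa_step_lin by simp
    finally show ?thesis .
  qed
  define y where "y = (\<chi> s. rho s + \<gamma> * (\<Sum>z'\<in>UNIV. m z' * P (fst z') (snd z') s))"
  have ss: "sa_step P pol m (s, a) = pol s a * (\<Sum>z'\<in>UNIV. m z' * P (fst z') (snd z') s)" for s a
    by (simp add: sa_step_apply sum_distrib_left mult_ac)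
  have my: "m (s, a) = y $ s * pol s a" for s a
    using mfix[of s a] unfolding ss by (simp add: y_def sa_step_apply sum_distrib_right[symmetric] algebra_simps)
  have yM: "(\<Sum>z'\<in>UNIV. m z' * P (fst z') (snd z') s') = (y v* Pmat P pol) $ s'" for s'
    by (simp add: sum_UNIV_pair my vector_matrix_mult_def Pmat_apply sum_distrib_left sum_distrib_right mult_ac)
  have yfix: "y $ s' = rho s' + \<gamma> * (y v* Pmat P pol) $ s'" for s'
  proof -
    have "y $ s' = rho s' + \<gamma> * (\<Sum>z'\<in>UNIV. m z' * P (fst z') (snd z') s')" by (simp add: y_def)
    then show ?thesis by (simp only: yM)
  qed
  have "y v* A = (\<chi> s. rho s)"
    by (simp add: vec_eq_iff A_def vmA yfix)
  then have Wy: "W = y"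
    unfolding W_def A_def[symmetric]
    by (metis vector_matrix_mul_assoc invA(1) vector_matrix_mul_rid)
  show "occ P rho \<gamma> pol $ (s, a) = W $ s * pol s a"
    using my by (simp add: m_def Wy)
  show "W $ s' = rho s' + \<gamma> * (W v* Pmat P pol) $ s'"
    using yfix by (simp add: Wy)
qed



theorem lemma16:
  fixes P :: "'s::finite \<Rightarrow> 'a::finite \<Rightarrow> 's \<Rightarrow> real"
    and rho :: "'s \<Rightarrow> real"
    and \<gamma> :: real
    and F :: "real ^ ('s \<times> 'a) \<Rightarrow> real"
    and Grad :: "real ^ ('s \<times> 'a) \<Rightarrow> real ^ ('s \<times> 'a)"
    and pol pol' :: "'s \<Rightarrow> 'a \<Rightarrow> real"
  assumes "stochastic_kernel P"
    and "distribution rho"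
    and "0 \<le> \<gamma>" and "\<gamma> < 1"
    and "policy pol" and "policy pol'"
    and "concave_on (occ_set P rho \<gamma>) F"
    and "\<forall>x\<in>occ_set P rho \<gamma>. (F has_derivative (\<lambda>h. Grad x \<bullet> h)) (at x within occ_set P rho \<gamma>)"
  shows "F (occ P rho \<gamma> pol') - F (occ P rho \<gamma> pol)
    \<le> 1 / (1 - \<gamma>) * (\<Sum>s\<in>UNIV. dstate P rho \<gamma> pol' $ s *
         (bellman P \<gamma> pol' (\<lambda>z. Grad (occ P rho \<gamma> pol) $ z) (Vfun P \<gamma> pol (\<lambda>z. Grad (occ P rho \<gamma> pol) $ z)) s
          - Vfun P \<gamma> pol (\<lambda>z. Grad (occ P rho \<gamma> pol) $ z) s))"
proof -
  note SK = assms(1) and g0 = assms(3) and g1 = assms(4) and PO = assms(5) and PO' = assms(6)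
  define \<mu> where "\<mu> = occ P rho \<gamma> pol"
  define \<mu>' where "\<mu>' = occ P rho \<gamma> pol'"
  define u where "u = (\<lambda>z. Grad \<mu> $ z)"
  define V where "V = Vfun P \<gamma> pol u"
  define M where "M = Pmat P pol'"
  define W where "W = (\<chi> s. rho s) v* matrix_inv (mat 1 - \<gamma> *\<^sub>R Pmat P pol')"
  define B where "B = bellman P \<gamma> pol' u V"
  have K: "\<mu> \<in> occ_set P rho \<gamma>" "\<mu>' \<in> occ_set P rho \<gamma>"
    using PO PO' by (auto simp: occ_set_def \<mu>_def \<mu>'_def)
  have step1: "F \<mu>' - F \<mu> \<le> Grad \<mu> \<bullet> (\<mu>' - \<mu>)"
    using concave_grad[OF assms(7) K(1) K(2)] assms(8) K(1) by blast
  have step2: "Grad \<mu> \<bullet> (\<mu>' - \<mu>) = (\<Sum>z\<in>UNIV. u z * \<mu>' $ z) - (\<Sum>z\<in>UNIV. u z * \<mu> $ z)"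
    by (simp add: inner_vec_def u_def right_diff_distrib sum_subtractf)
  have step4: "(\<Sum>z\<in>UNIV. u z * \<mu>' $ z) = (\<Sum>s\<in>UNIV. W $ s * (\<Sum>a\<in>UNIV. pol' s a * u (s, a)))"
    unfolding sum_UNIV_pair \<mu>'_def part_a(1)[OF SK PO' g0 g1] W_def
    by (simp add: sum_distrib_left sum_distrib_right mult_ac)
  have step5: "(\<Sum>z\<in>UNIV. u z * \<mu> $ z) = (\<Sum>s\<in>UNIV. rho s * V s)"
    unfolding \<mu>_def V_def by (rule part_b[OF SK PO g0 g1])
  have Wfix: "W $ s' - rho s' = \<gamma> * (\<Sum>s\<in>UNIV. M $ s $ s' * W $ s)" for s'
  proof -
    have "W $ s' = rho s' + \<gamma> * (W v* M) $ s'"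
      using part_a(2)[OF SK PO' g0 g1, of rho s'] unfolding W_def M_def .
    moreover have "(W v* M) $ s' = (\<Sum>s\<in>UNIV. M $ s $ s' * W $ s)"
      by (simp add: vector_matrix_mult_def mult.commute)
    ultimately show ?thesis by simp
  qed
  have step7: "B s = (\<Sum>a\<in>UNIV. pol' s a * u (s, a)) + \<gamma> * (\<Sum>s'\<in>UNIV. M $ s $ s' * V s')" for s
  proof -
    have "(\<Sum>a\<in>UNIV. pol' s a * (\<gamma> * (\<Sum>s'\<in>UNIV. P s a s' * V s'))) =
        \<gamma> * (\<Sum>a\<in>UNIV. \<Sum>s'\<in>UNIV. pol' s a * P s a s' * V s')"
      by (simp add: sum_distrib_left mult_ac)
    also have "\<dots> = \<gamma> * (\<Sum>s'\<in>UNIV. \<Sum>a\<in>UNIV. pol' s a * P s a s' * V s')"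
      by (subst sum.swap) simp
    also have "\<dots> = \<gamma> * (\<Sum>s'\<in>UNIV. M $ s $ s' * V s')"
      by (simp add: M_def Pmat_apply sum_distrib_right)
    finally show ?thesis
      by (simp add: B_def bellman_def distrib_left sum.distrib)
  qed
  have step8: "(\<Sum>s\<in>UNIV. W $ s * (\<gamma> * (\<Sum>s'\<in>UNIV. M $ s $ s' * V s'))) = (\<Sum>s'\<in>UNIV. (W $ s' - rho s') * V s')"
  proof -
    have "(\<Sum>s\<in>UNIV. W $ s * (\<gamma> * (\<Sum>s'\<in>UNIV. M $ s $ s' * V s'))) =
        (\<Sum>s\<in>UNIV. \<Sum>s'\<in>UNIV. \<gamma> * (M $ s $ s' * W $ s) * V s')"
      by (simp add: sum_distrib_left mult_ac)
    also have "\<dots> = (\<Sum>s'\<in>UNIV. \<Sum>s\<in>UNIV. \<gamma> * (M $ s $ s' * W $ s) * V s')"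
      by (rule sum.swap)
    also have "\<dots> = (\<Sum>s'\<in>UNIV. (W $ s' - rho s') * V s')"
      by (simp add: Wfix sum_distrib_left[symmetric] sum_distrib_right[symmetric])
    finally show ?thesis .
  qed
  have d: "dstate P rho \<gamma> pol' $ s = (1 - \<gamma>) * W $ s" for s
    by (simp add: dstate_def W_def)
  have "1 / (1 - \<gamma>) * (\<Sum>s\<in>UNIV. dstate P rho \<gamma> pol' $ s * (B s - V s)) = (\<Sum>s\<in>UNIV. W $ s * (B s - V s))"
    using g1 by (simp add: d sum_distrib_left[symmetric] mult.assoc)
  also have "\<dots> = (\<Sum>s\<in>UNIV. W $ s * (\<Sum>a\<in>UNIV. pol' s a * u (s, a)))
       + (\<Sum>s\<in>UNIV. W $ s * (\<gamma> * (\<Sum>s'\<in>UNIV. M $ s $ s' * V s'))) - (\<Sum>s\<in>UNIV. W $ s * V s)"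
    by (simp add: step7 distrib_left right_diff_distrib sum.distrib sum_subtractf)
  also have "\<dots> = (\<Sum>s\<in>UNIV. W $ s * (\<Sum>a\<in>UNIV. pol' s a * u (s, a))) - (\<Sum>s\<in>UNIV. rho s * V s)"
    by (simp add: step8 left_diff_distrib sum_subtractf)
  also have "\<dots> = Grad \<mu> \<bullet> (\<mu>' - \<mu>)"
    by (simp add: step2 step4 step5)
  finally show ?thesis
    using step1 by (simp add: \<mu>_def \<mu>'_def u_def V_def B_def)
qed


end
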